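(* Let $K$ be an algebraically closed field of characteristic zero, $\mathcal{K} = K(t)$, $\alpha \in \mathcal{K}$, and let $N \ge 1$, $d \ge 2$ be integers. Then $\alpha$ realizes portrait $(0,N)$ for $f_d(z) = z^d+t$ if and only if $(\alpha,N,d) \ne (-1/2,2,2)$.
   Context: For $c \in K$, let $f_{d,c}(z) = z^d+c$. A point $x$ has preperiodic portrait $(M,N)$ for a map $\phi$ if $M \ge 0$ is minimal with $\phi^M(x)$ periodic and $\phi^M(x)$ has exact period $N$. We say $\alpha \in \mathcal{K}$ realizes portrait $(M,N)$ for $f_d$ if there exists $c \in K$ such that the specialization $\alpha(c) \in \mathbb{P}^1(K)$ (reduction of $\alpha$ modulo the place $t=c$) has portrait $(M,N)$ for $f_{d,c}$. *)

theory Defs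
  imports "HOL-Computational_Algebra.Computational_Algebra"
begin

text \<open>Points of the projective line P^1(K): None is the point at infinity.\<close>

definition fdc :: "nat \<Rightarrow> 'a::field \<Rightarrow> 'a option \<Rightarrow> 'a option" where
  "fdc d c x = (case x of None \<Rightarrow> None | Some z \<Rightarrow> Some (z ^ d + c))"

definition specialize :: "'a::field_gcd poly fract \<Rightarrow> 'a \<Rightarrow> 'a option" where
  "specialize \<alpha> c = (case quot_of_fract \<alpha> of (p, q) \<Rightarrow>
     (if poly q c = 0 then None else Some (poly p c / poly q c)))"

definition has_exact_period :: "('b \<Rightarrow> 'b) \<Rightarrow> 'b \<Rightarrow> nat \<Rightarrow> bool" where
  "has_exact_period \<phi> x N \<longleftrightarrow> N \<ge> 1 \<and> (\<phi> ^^ N) x = x \<and> (\<forall>m. 0 < m \<and> m < N \<longrightarrow> (\<phi> ^^ m) x \<noteq> x)"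

definition is_periodic :: "('b \<Rightarrow> 'b) \<Rightarrow> 'b \<Rightarrow> bool" where
  "is_periodic \<phi> x \<longleftrightarrow> (\<exists>n\<ge>1. (\<phi> ^^ n) x = x)"

definition has_portrait :: "('b \<Rightarrow> 'b) \<Rightarrow> 'b \<Rightarrow> nat \<Rightarrow> nat \<Rightarrow> bool" where
  "has_portrait \<phi> x M N \<longleftrightarrow>
     is_periodic \<phi> ((\<phi> ^^ M) x) \<and> (\<forall>m<M. \<not> is_periodic \<phi> ((\<phi> ^^ m) x)) \<and>
     has_exact_period \<phi> ((\<phi> ^^ M) x) N"

definition realizes_portrait :: "'a::field_gcd poly fract \<Rightarrow> nat \<Rightarrow> nat \<Rightarrow> nat \<Rightarrow> bool" where
  "realizes_portrait \<alpha> d M N \<longleftrightarrow> (\<exists>c. has_portrait (fdc d c) (specialize \<alpha> c) M N)"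

end

theory Submission
  imports Defs
begin


lemma pderiv_order_dvd:
  fixes B :: "'a::{idom,semiring_char_0} poly"
  shows "[:-c,1:] ^ (order c B - 1) dvd pderiv B"
proof (cases "pderiv B = 0")
  case True then show ?thesis by simp
next
  case False
  then have B0: "B \<noteq> 0" by auto
  show ?thesis
  proof (cases "poly B c = 0")
    case True
    from order_pderiv[OF B0 True] have "order c B - 1 = order c (pderiv B)" by simp
    then show ?thesis using order_1 by metis
  next
    case False
    then have "order c B = 0" by (rule order_0I)
    then show ?thesis by simp
  qed
qed

lemma wronsk_order:
  fixes A B :: "'a::{idom,semiring_char_0} poly"
  assumes W: "A * pderiv B - pderiv A * B \<noteq> 0"
  shows "order c A + order c B \<le> order c (A * pderiv B - pderiv A * B) + 1"
proof -
  define l where "l = [:-c,1:]"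
  define a where "a = order c A"
  define b where "b = order c B"
  have dA: "l ^ a dvd A" and dB: "l ^ b dvd B" unfolding l_def a_def b_def by (simp_all add: order_1)
  have dA': "l ^ (a - 1) dvd pderiv A" unfolding l_def a_def by (rule pderiv_order_dvd)
  have dB': "l ^ (b - 1) dvd pderiv B" unfolding l_def b_def by (rule pderiv_order_dvd)
  have 1: "l ^ (a + (b - 1)) dvd A * pderiv B" using dA dB' by (simp add: power_add mult_dvd_mono)
  have 2: "l ^ ((a - 1) + b) dvd pderiv A * B" using dA' dB by (simp add: power_add mult_dvd_mono)
  have "l ^ (a + b - 1) dvd A * pderiv B"
    by (rule dvd_trans[OF le_imp_power_dvd 1]) arith
  moreover have "l ^ (a + b - 1) dvd pderiv A * B"
    by (rule dvd_trans[OF le_imp_power_dvd 2]) arith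
  ultimately have "l ^ (a + b - 1) dvd A * pderiv B - pderiv A * B" by (rule dvd_diff)
  then have "a + b - 1 \<le> order c (A * pderiv B - pderiv A * B)"
    using W unfolding l_def by (simp add: order_divides)
  then show ?thesis unfolding a_def b_def by arith
qed

lemma sum_order_le_degree:
  fixes W :: "'a::idom poly"
  assumes "finite S" "W \<noteq> 0"
  shows "(\<Sum>c\<in>S. order c W) \<le> degree W"
  using assms
proof (induction S arbitrary: W rule: finite_induct)
  case empty then show ?case by simp
next
  case (insert x S)
  obtain W1 where W1: "W = [:-x,1:] ^ order x W * W1"
    using order_1 by (metis dvdE)
  have W10: "W1 \<noteq> 0" using insert.prems W1 by auto
  have ord: "order c W1 = order c W" if "c \<in> S" for c
  proof -
    have "c \<noteq> x" using that insert.hyps by auto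
    then have "order c ([:-x,1:] ^ order x W) = 0"
      by (intro order_0I) simp
    then show ?thesis using W1 W10 insert.prems by (metis add_0 order_mult)
  qed
  have "(\<Sum>c\<in>S. order c W) = (\<Sum>c\<in>S. order c W1)" using ord by simp
  also have "\<dots> \<le> degree W1" by (rule insert.IH[OF W10])
  finally have "(\<Sum>c\<in>S. order c W) \<le> degree W1" .
  moreover have "degree W = order x W + degree W1"
    using W10 by (subst W1) (simp add: degree_mult_eq degree_linear_power)
  ultimately show ?case using insert.hyps by simp
qed

lemma degree_le_sum_order:
  fixes F :: "'a::alg_closed_field poly"
  assumes "finite S" "F \<noteq> 0" "\<And>c. poly F c = 0 \<Longrightarrow> c \<in> S"
  shows "degree F \<le> (\<Sum>c\<in>S. order c F)"
  using assms(2,3)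
proof (induction "degree F" arbitrary: F rule: less_induct)
  case (less F)
  show ?case
  proof (cases "degree F = 0")
    case True then show ?thesis by simp
  next
    case False
    then obtain x where x: "poly F x = 0" using alg_closed_imp_poly_has_root by blast
    then obtain F1 where F1: "F = [:-x,1:] * F1" using poly_eq_0_iff_dvd by (metis dvdE)
    have F10: "F1 \<noteq> 0" using less.prems F1 by auto
    have deg: "degree F = Suc (degree F1)" using F10 unfolding F1 by (subst degree_mult_eq) auto
    have lt: "degree F1 < degree F" using deg by simp
    have rt: "\<And>c. poly F1 c = 0 \<Longrightarrow> c \<in> S" using less.prems(2) by (auto simp: F1)
    have "degree F1 \<le> (\<Sum>c\<in>S. order c F1)"
      using less.hyps[OF lt F10 rt] .
    moreover have "(\<Sum>c\<in>S. order c F) = (\<Sum>c\<in>S. order c [:-x,1:]) + (\<Sum>c\<in>S. order c F1)"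
      using less.prems(1) unfolding F1 sum.distrib[symmetric] by (intro sum.cong refl order_mult)
    moreover have "1 \<le> (\<Sum>c\<in>S. order c [:-x,1:])"
    proof -
      have "x \<in> S" using less.prems x by auto
      then have "order x [:-x,1:] \<le> (\<Sum>c\<in>S. order c [:-x,1:])"
        using assms(1) by (intro member_le_sum) auto
      moreover have "order x [:-x,1:] = 1" using order_power_n_n[of x 1] by simp
      ultimately show ?thesis by simp
    qed
    ultimately show ?thesis using deg by simp
  qed
qed



lemma wronsk_nonzero:
  fixes X Y :: "'a::field_char_0 poly"
  assumes "degree Y < degree X" "Y \<noteq> 0"
  shows "X * pderiv Y - pderiv X * Y \<noteq> 0"
proof (cases "degree Y = 0")
  case True
  then have "pderiv Y = 0" by (simp add: pderiv_eq_0_iff)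
  moreover have "pderiv X \<noteq> 0" using assms by (simp add: pderiv_eq_0_iff)
  ultimately show ?thesis using assms by simp
next
  case False
  define n where "n = degree X + degree Y - 1"
  have X0: "X \<noteq> 0" using assms by auto
  have dY': "degree (pderiv Y) = degree Y - 1" by (simp add: degree_pderiv)
  have dX': "degree (pderiv X) = degree X - 1" by (simp add: degree_pderiv)
  have cY': "coeff (pderiv Y) (degree Y - 1) = of_nat (degree Y) * lead_coeff Y"
    using False by (simp add: coeff_pderiv)
  have cX': "coeff (pderiv X) (degree X - 1) = of_nat (degree X) * lead_coeff X"
    using assms by (simp add: coeff_pderiv)
  have 1: "coeff (X * pderiv Y) n = lead_coeff X * (of_nat (degree Y) * lead_coeff Y)"
  proof -
    have nn: "n = degree X + degree (pderiv Y)" using False unfolding n_def dY' by simp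
    have "coeff (X * pderiv Y) n = coeff X (degree X) * coeff (pderiv Y) (degree (pderiv Y))"
      unfolding nn by (rule coeff_mult_degree_sum)
    then show ?thesis by (simp only: dY' cY')
  qed
  have 2: "coeff (pderiv X * Y) n = (of_nat (degree X) * lead_coeff X) * lead_coeff Y"
  proof -
    have nn: "n = degree (pderiv X) + degree Y" using assms unfolding n_def dX' by simp
    have "coeff (pderiv X * Y) n = coeff (pderiv X) (degree (pderiv X)) * coeff Y (degree Y)"
      unfolding nn by (rule coeff_mult_degree_sum)
    then show ?thesis by (simp only: dX' cX')
  qed
  have "coeff (X * pderiv Y - pderiv X * Y) n = lead_coeff X * lead_coeff Y * (of_nat (degree Y) - of_nat (degree X))"
    by (simp only: coeff_diff 1 2) (simp add: algebra_simps)
  moreover have "(of_nat (degree Y) :: 'a) - of_nat (degree X) \<noteq> 0" using assms by simp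
  ultimately have "coeff (X * pderiv Y - pderiv X * Y) n \<noteq> 0" using X0 assms by simp
  then show ?thesis by auto
qed

lemma wronsk_degree:
  fixes X Y :: "'a::field_char_0 poly"
  assumes "degree X \<ge> 1"
  shows "degree (X * pderiv Y - pderiv X * Y) \<le> degree X + degree Y - 1"
proof -
  have "degree (X * pderiv Y) \<le> degree X + degree Y - 1"
  proof (cases "degree Y = 0")
    case True then have "pderiv Y = 0" by (simp add: pderiv_eq_0_iff)
    then show ?thesis by simp
  next
    case False then show ?thesis
      using degree_mult_le[of X "pderiv Y"] by (simp add: degree_pderiv)
  qed
  moreover have "degree (pderiv X * Y) \<le> (degree X - 1) + degree Y"
    using degree_mult_le[of "pderiv X" Y] by (simp add: degree_pderiv)
  ultimately have "degree (X * pderiv Y) \<le> degree X + degree Y - 1"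
     "degree (pderiv X * Y) \<le> degree X + degree Y - 1" using assms by linarith+
  then show ?thesis by (rule degree_diff_le)
qed

lemma sum_indicator_card:
  assumes "finite S" "A \<subseteq> S"
  shows "(\<Sum>c\<in>S. if c \<in> A then 1 else 0 :: nat) = card A"
proof -
  have "(\<Sum>c\<in>S. if c \<in> A then 1 else 0 :: nat) = card (S \<inter> {c. c \<in> A})"
    using assms by (simp add: sum.If_cases)
  also have "S \<inter> {c. c \<in> A} = A" using assms by auto
  finally show ?thesis .
qed

lemma mason:
  fixes X Y Q :: "'a::{alg_closed_field, field_char_0} poly"
  assumes W: "X * pderiv Y - pderiv X * Y \<noteq> 0" and QY: "Q dvd Y"
    and cop: "\<And>c. poly Q c = 0 \<Longrightarrow> poly X c \<noteq> 0"
  shows "degree X + degree (X + Y) + degree Q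
     \<le> card {c. poly X c = 0} + card {c. poly (X + Y) c = 0} + card {c. poly Q c = 0}
        + degree (X * pderiv Y - pderiv X * Y)"
proof -
  define Z where "Z = X + Y"
  define Wp where "Wp = X * pderiv Y - pderiv X * Y"
  have WZ: "X * pderiv Z - pderiv X * Z = Wp" unfolding Z_def Wp_def by (simp add: pderiv_add algebra_simps)
  have X0: "X \<noteq> 0" using W by auto
  have Y0: "Y \<noteq> 0" using W by auto
  have Z0: "Z \<noteq> 0"
  proof
    assume "Z = 0"
    then have "Y = - X" unfolding Z_def by (simp add: eq_neg_iff_add_eq_0 add.commute)
    then have "Wp = 0" unfolding Wp_def by (simp add: pderiv_minus algebra_simps)
    then show False using W unfolding Wp_def by simp
  qed
  have Q0: "Q \<noteq> 0" using QY Y0 by auto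
  define rX where "rX = {c. poly X c = 0}"
  define rZ where "rZ = {c. poly Z c = 0}"
  define rQ where "rQ = {c. poly Q c = 0}"
  define S where "S = rX \<union> rZ \<union> rQ"
  have fS: "finite S" unfolding S_def rX_def rZ_def rQ_def using X0 Z0 Q0 by (simp add: poly_roots_finite)
  have pt: "order c X + order c Z + order c Q \<le>
      (if c \<in> rX then 1 else 0) + (if c \<in> rZ then 1 else 0) + (if c \<in> rQ then 1 else 0) + order c Wp" for c
  proof (cases "poly Q c = 0")
    case True
    then have pX: "poly X c \<noteq> 0" by (rule cop)
    have "poly Y c = 0" using QY True by (metis dvdE mult_eq_0_iff poly_mult)
    then have pZ: "poly Z c \<noteq> 0" using pX unfolding Z_def by simp
    have oX: "order c X = 0" and oZ: "order c Z = 0" using pX pZ by (simp_all add: order_0I)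
    obtain R where R: "Y = Q * R" using QY by (elim dvdE)
    have "order c Q \<le> order c Y" using Y0 unfolding R by (simp add: order_mult)
    moreover have "order c X + order c Y \<le> order c Wp + 1" using wronsk_order[OF W] unfolding Wp_def .
    ultimately show ?thesis using oX oZ True unfolding rQ_def by simp
  next
    case False
    then have oQ: "order c Q = 0" by (simp add: order_0I)
    have W': "X * pderiv Z - pderiv X * Z \<noteq> 0" using W WZ unfolding Wp_def by simp
    have "order c X + order c Z \<le> order c Wp + 1" using wronsk_order[OF W'] unfolding WZ .
    moreover have "c \<in> rX \<longleftrightarrow> order c X > 0" unfolding rX_def using X0 by (simp add: order_gt_0_iff)
    moreover have "c \<in> rZ \<longleftrightarrow> order c Z > 0" unfolding rZ_def using Z0 by (simp add: order_gt_0_iff)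
    ultimately show ?thesis using oQ by auto
  qed
  have "degree X + degree Z + degree Q \<le>
     (\<Sum>c\<in>S. order c X) + (\<Sum>c\<in>S. order c Z) + (\<Sum>c\<in>S. order c Q)"
    using degree_le_sum_order[OF fS X0] degree_le_sum_order[OF fS Z0] degree_le_sum_order[OF fS Q0]
    unfolding S_def rX_def rZ_def rQ_def by fastforce
  also have "\<dots> = (\<Sum>c\<in>S. order c X + order c Z + order c Q)" by (simp add: sum.distrib)
  also have "\<dots> \<le> (\<Sum>c\<in>S. (if c \<in> rX then 1 else 0) + (if c \<in> rZ then 1 else 0) + (if c \<in> rQ then 1 else 0) + order c Wp)"
    by (intro sum_mono pt)
  also have "\<dots> = card rX + card rZ + card rQ + (\<Sum>c\<in>S. order c Wp)"
  proof -
    have i1: "(\<Sum>c\<in>S. if c \<in> rX then 1 else 0) = card rX" by (rule sum_indicator_card[OF fS]) (auto simp: S_def)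
    have i2: "(\<Sum>c\<in>S. if c \<in> rZ then 1 else 0) = card rZ" by (rule sum_indicator_card[OF fS]) (auto simp: S_def)
    have i3: "(\<Sum>c\<in>S. if c \<in> rQ then 1 else 0) = card rQ" by (rule sum_indicator_card[OF fS]) (auto simp: S_def)
    show ?thesis by (simp only: sum.distrib i1 i2 i3)
  qed
  also have "(\<Sum>c\<in>S. order c Wp) \<le> degree Wp" using sum_order_le_degree[OF fS] W unfolding Wp_def by simp
  finally show ?thesis unfolding Wp_def Z_def rX_def rZ_def rQ_def by simp
qed



fun PP :: "nat \<Rightarrow> 'a::comm_ring_1 poly \<Rightarrow> 'a poly \<Rightarrow> nat \<Rightarrow> 'a poly" where
  "PP d p q 0 = p"
| "PP d p q (Suc n) = (PP d p q n) ^ d + [:0,1:] * q ^ (d ^ Suc n)"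

definition HH :: "nat \<Rightarrow> 'a::comm_ring_1 poly \<Rightarrow> 'a poly \<Rightarrow> nat \<Rightarrow> 'a poly" where
  "HH d p q n = PP d p q n - p * q ^ (d ^ n - 1)"

lemma orbit_PP:
  fixes p q :: "'a::field poly"
  assumes "poly q c \<noteq> 0"
  shows "(fdc d c ^^ n) (Some (poly p c / poly q c)) = Some (poly (PP d p q n) c / poly q c ^ (d ^ n))"
proof (induction n)
  case 0 then show ?case by simp
next
  case (Suc n)
  have Qd: "(poly q c ^ d ^ n) ^ d = poly q c ^ d ^ Suc n" by (simp add: power_mult[symmetric] mult.commute)
  have "(poly (PP d p q n) c / poly q c ^ d ^ n) ^ d + c
      = (poly (PP d p q n) c ^ d + c * poly q c ^ (d ^ Suc n)) / poly q c ^ (d ^ Suc n)"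
    using assms by (simp add: power_divide Qd divide_add_eq_iff)
  then show ?case using Suc by (simp add: fdc_def)
qed

lemma H_root_iff:
  fixes p q :: "'a::field poly"
  assumes "poly q c \<noteq> 0" "d \<ge> 1"
  shows "poly (PP d p q n) c / poly q c ^ (d ^ n) = poly p c / poly q c \<longleftrightarrow> poly (HH d p q n) c = 0"
proof -
  have e: "poly q c ^ (d ^ n) = poly q c * poly q c ^ (d ^ n - 1)"
  proof -
    have "d ^ n \<ge> 1" using assms by simp
    then have "d ^ n = Suc (d ^ n - 1)" by simp
    then show ?thesis by (metis power_Suc)
  qed
  show ?thesis using assms unfolding HH_def by (simp add: e field_simps)
qed

lemma poly_PP_q0:
  fixes p q :: "'a::comm_ring_1 poly"
  assumes "poly q c = 0" "d \<ge> 1"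
  shows "poly (PP d p q n) c = poly p c ^ (d ^ n)"
  by (induction n) (use assms in \<open>simp_all add: power_mult[symmetric] mult.commute zero_power\<close>)

lemma coprime_no_common_root:
  fixes p q :: "'a::field poly"
  assumes "coprime p q" "poly q c = 0"
  shows "poly p c \<noteq> 0"
proof
  assume "poly p c = 0"
  then have "[:-c,1:] dvd p" "[:-c,1:] dvd q" using assms by (simp_all add: poly_eq_0_iff_dvd)
  then have "is_unit [:-c,1:]" using assms(1) by (metis coprime_common_divisor)
  then show False by (simp add: is_unit_iff_degree)
qed

lemma poly_HH_q0:
  fixes p q :: "'a::field poly"
  assumes "coprime p q" "poly q c = 0" "d \<ge> 2" "n \<ge> 1"
  shows "poly (HH d p q n) c \<noteq> 0"
proof -
  have "d ^ n \<ge> 2" using assms by (metis le_trans power_increasing power_one_right Suc_1 Suc_leD)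
  then have "poly (HH d p q n) c = poly p c ^ (d ^ n)"
    using assms unfolding HH_def by (simp add: poly_PP_q0 zero_power)
  then show ?thesis using coprime_no_common_root[OF assms(1,2)] by simp
qed

lemma HH_identity:
  fixes p q :: "'a::comm_ring_1 poly"
  assumes "d \<ge> 1"
  shows "HH d p q (Suc m) = PP d p q m ^ d + q ^ (d ^ Suc m - 1) * ([:0,1:] * q - p)"
proof -
  have "q ^ (d ^ Suc m) = q ^ (d ^ Suc m - 1) * q"
  proof -
    have "d ^ Suc m \<ge> 1" using assms by (simp del: power_Suc)
    then have "d ^ Suc m = Suc (d ^ Suc m - 1)" by simp
    then show ?thesis by (metis power_Suc2)
  qed
  then show ?thesis unfolding HH_def by (simp add: algebra_simps)
qed



lemma geom_bound: "(d::nat) \<ge> 2 \<Longrightarrow> (\<Sum>i<k. d ^ i) + 1 \<le> d ^ k"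
proof (induction k)
  case 0 then show ?case by simp
next
  case (Suc k)
  have "(\<Sum>i<Suc k. d ^ i) + 1 = ((\<Sum>i<k. d ^ i) + 1) + d ^ k" by simp
  also have "\<dots> \<le> d ^ k + d ^ k" using Suc by simp
  also have "\<dots> \<le> d * d ^ k" using Suc.prems by (simp add: mult_2[symmetric] mult_right_mono)
  finally show ?case by simp
qed

lemma numeric_bound:
  fixes d K :: nat
  assumes "d \<ge> 2" "\<not> (K = 0 \<and> d = 2)"
  shows "(\<Sum>i<(K+2) div 2. d ^ i) + 1 \<le> d ^ K * (d - 1)"
proof (cases "K \<le> 1")
  case True
  then have k: "(K + 2) div 2 = 1" by auto
  show ?thesis
  proof (cases "K = 0")
    case True then show ?thesis using assms k by simp
  next
    case False
    then have "K = 1" using \<open>K \<le> 1\<close> by simp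
    moreover have "2 \<le> d * (d - 1)" using assms mult_le_mono[of 2 d 1 "d - 1"] by simp
    ultimately show ?thesis using k by simp
  qed
next
  case False
  define k where "k = (K + 2) div 2"
  have "k \<le> K" using False unfolding k_def by auto
  have "(\<Sum>i<k. d ^ i) + 1 \<le> d ^ k" by (rule geom_bound[OF assms(1)])
  also have "\<dots> \<le> d ^ K" using \<open>k \<le> K\<close> assms by (simp add: power_increasing)
  also have "\<dots> \<le> d ^ K * (d - 1)" using assms by simp
  finally show ?thesis unfolding k_def .
qed

lemma X_times: "[:0,1:] * (q :: 'a::comm_ring_1 poly) = pCons 0 q"
  by (simp add: mult_pCons_left)

lemma degree_X_times: "(q :: 'a::comm_ring_1 poly) \<noteq> 0 \<Longrightarrow> degree ([:0,1:] * q) = Suc (degree q)"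
  unfolding X_times by (simp add: degree_pCons_eq)

lemma pow_ge2: "(d::nat) \<ge> 2 \<Longrightarrow> d * d ^ j \<ge> 2"
proof -
  assume "d \<ge> 2"
  moreover have "d ^ j \<ge> 1" using \<open>d \<ge> 2\<close> by simp
  ultimately show ?thesis using mult_le_mono[of 2 d 1 "d ^ j"] by simp
qed

lemma arith_bound:
  fixes d a b t j :: nat
  assumes "d \<ge> 2" "t \<le> a \<or> (a \<le> b \<and> t < b + d ^ j)"
  shows "(d ^ Suc j - 1) * b + t < d ^ j * max (d * a) (d * b + 1)"
proof -
  define D where "D = d ^ Suc j"
  have D2: "D \<ge> 2" unfolding D_def using pow_ge2[OF assms(1)] by simp
  have DD: "D = d ^ j * d" unfolding D_def by (simp add: mult.commute)
  show ?thesis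
  proof (cases "a \<le> b")
    case True
    have "d ^ j > 0" using assms by simp
    then have "t < b + d ^ j" using assms True by linarith
    then have "(D - 1) * b + t < (D - 1) * b + b + d ^ j" by simp
    also have "(D - 1) * b + b = D * b" using D2 by (simp add: algebra_simps)
    also have "D * b + d ^ j = d ^ j * (d * b + 1)" unfolding DD by (simp add: algebra_simps)
    also have "\<dots> \<le> d ^ j * max (d * a) (d * b + 1)" by (intro mult_le_mono2) simp
    finally show ?thesis unfolding D_def .
  next
    case False
    then have "t \<le> a" using assms by auto
    have "(D - 1) * b < (D - 1) * a" using False D2 by simp
    then have "(D - 1) * b + t < (D - 1) * a + a" using \<open>t \<le> a\<close> by (rule add_less_le_mono)
    also have "(D - 1) * a + a = D * a" using D2 by (simp add: algebra_simps)
    also have "\<dots> = d ^ j * (d * a)" unfolding DD by (simp add: algebra_simps)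
    also have "\<dots> \<le> d ^ j * max (d * a) (d * b + 1)" by (intro mult_le_mono2) simp
    finally show ?thesis unfolding D_def .
  qed
qed

lemma deg_PP:
  fixes p q :: "'a::field poly"
  assumes "d \<ge> 2" "q \<noteq> 0"
  shows "degree (PP d p q (Suc k)) = d ^ k * max (d * degree p) (d * degree q + 1)"
proof (induction k)
  case 0
  define a where "a = degree p"
  define b where "b = degree q"
  have dB: "degree ([:0,1:] * q ^ d) = d * b + 1"
    using assms by (simp add: degree_X_times degree_power_eq b_def)
  have dA: "degree (p ^ d) \<le> d * a" unfolding a_def by (metis degree_power_le mult.commute)
  have ne: "d * a \<noteq> d * b + 1"
  proof
    assume "d * a = d * b + 1"
    then have "d dvd 1" by (metis dvd_add_right_iff dvd_triv_left)
    then show False using assms by simp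
  qed
  show ?case
  proof (cases "d * a < d * b + 1")
    case True
    then have "degree (p ^ d + [:0,1:] * q ^ d) = d * b + 1" using dA dB
      by (subst degree_add_eq_right) auto
    then show ?thesis using True by (simp add: a_def b_def)
  next
    case False
    then have "a > 0" by (cases "a = 0") auto
    then have "p \<noteq> 0" unfolding a_def by auto
    then have dA': "degree (p ^ d) = d * a" unfolding a_def by (simp add: degree_power_eq)
    have "degree (p ^ d + [:0,1:] * q ^ d) = d * a" using dA' dB False ne
      by (subst degree_add_eq_left) auto
    then show ?thesis using False by (simp add: a_def b_def)
  qed
next
  case (Suc k)
  define E where "E = max (d * degree p) (d * degree q + 1)"
  have E1: "E \<ge> d * degree q + 1" unfolding E_def by simp
  have dk: "d ^ Suc k \<ge> 2" using pow_ge2[OF assms(1)] by simp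
  have P0: "PP d p q (Suc k) \<noteq> 0"
  proof
    assume "PP d p q (Suc k) = 0"
    then have "d ^ k * E = 0" using Suc.IH unfolding E_def by simp
    then show False using E1 assms by simp
  qed
  have dA: "degree (PP d p q (Suc k) ^ d) = d ^ Suc k * E"
    using P0 Suc.IH unfolding E_def by (simp add: degree_power_eq)
  have dB: "degree ([:0,1:] * q ^ (d ^ Suc (Suc k))) = d ^ Suc (Suc k) * degree q + 1"
    using assms by (simp add: degree_X_times degree_power_eq del: power_Suc)
  have "d ^ Suc (Suc k) * degree q + 1 < d ^ Suc (Suc k) * degree q + d ^ Suc k" using dk by simp
  also have "\<dots> = d ^ Suc k * (d * degree q + 1)" by (simp add: algebra_simps)
  also have "\<dots> \<le> d ^ Suc k * E" using E1 by (intro mult_le_mono2) simp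
  finally have lt: "degree ([:0,1:] * q ^ (d ^ Suc (Suc k))) < degree (PP d p q (Suc k) ^ d)"
    using dA dB by simp
  have "degree (PP d p q (Suc (Suc k))) = degree (PP d p q (Suc k) ^ d)"
    using lt by (simp del: power_Suc PP.simps add: PP.simps(2)[of d p q "Suc k"] degree_add_eq_left)
  then show ?case using dA unfolding E_def by simp
qed



lemma degree_diff_eq_left': "degree q < degree p \<Longrightarrow> degree (p - q) = degree p"
  for p q :: "'a::comm_ring_1 poly"
  using degree_add_eq_left[of "-q" p] by simp

lemma deg_HH:
  fixes p q :: "'a::field poly"
  assumes "d \<ge> 2" "q \<noteq> 0"
  shows "degree (HH d p q (Suc k)) = d ^ k * max (d * degree p) (d * degree q + 1)"
proof -
  define E where "E = max (d * degree p) (d * degree q + 1)"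
  have E1: "E \<ge> 1" unfolding E_def by simp
  have "degree (p * q ^ (d ^ Suc k - 1)) < d ^ k * E"
  proof (cases "p = 0")
    case True then show ?thesis using E1 assms by simp
  next
    case False
    then have "degree (p * q ^ (d ^ Suc k - 1)) = (d ^ Suc k - 1) * degree q + degree p"
      using assms by (simp add: degree_mult_eq degree_power_eq del: power_Suc)
    also have "\<dots> < d ^ k * E" unfolding E_def by (rule arith_bound[OF assms(1)]) simp
    finally show ?thesis .
  qed
  then show ?thesis unfolding HH_def E_def
    using deg_PP[OF assms, of p k] by (simp add: degree_diff_eq_left' E_def del: power_Suc)
qed

lemma card_roots_power:
  fixes P :: "'a::idom poly"
  assumes "n > 0"
  shows "{c. poly (P ^ n) c = 0} = {c. poly P c = 0}"
  using assms by (simp add: poly_power)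

lemma count_general:
  fixes p q :: "'a::{alg_closed_field, field_char_0} poly"
  assumes d2: "d \<ge> 2" and q0: "q \<noteq> 0" and cop: "coprime p q"
    and T0: "[:0,1:] * q - p \<noteq> 0" and ex: "\<not> (K = 0 \<and> d = 2)"
  shows "\<exists>c. poly (HH d p q (K+2)) c = 0 \<and> (\<forall>i < (K+2) div 2. poly (HH d p q (Suc i)) c \<noteq> 0)"
proof -
  define a where "a = degree p"
  define b where "b = degree q"
  define E where "E = max (d * a) (d * b + 1)"
  define T where "T = [:0,1:] * q - p"
  define X where "X = PP d p q (Suc K) ^ d"
  define Q where "Q = q ^ (d ^ Suc (Suc K) - 1)"
  define Y where "Y = Q * T"
  define k where "k = (K + 2) div 2"
  have E1: "E \<ge> 1" unfolding E_def by simp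
  have Zeq: "HH d p q (K+2) = X + Y"
    using HH_identity[of d p q "Suc K"] d2 by (simp add: X_def Y_def Q_def T_def)
  have dP: "degree (PP d p q (Suc K)) = d ^ K * E"
    using deg_PP[OF d2 q0] unfolding E_def a_def b_def by simp
  have P0: "PP d p q (Suc K) \<noteq> 0"
  proof
    assume "PP d p q (Suc K) = 0"
    then show False using dP E1 d2 by simp
  qed
  have dX: "degree X = d ^ Suc K * E" unfolding X_def using P0 dP by (simp add: degree_power_eq)
  have Q0: "Q \<noteq> 0" unfolding Q_def using q0 by simp
  have dQ: "degree Q = (d ^ Suc (Suc K) - 1) * b" unfolding Q_def b_def using q0
    by (simp add: degree_power_eq del: power_Suc)
  have dT: "degree T \<le> max (Suc b) a"
    using degree_diff_le_max[of "[:0,1:] * q" p] degree_X_times[OF q0] unfolding T_def a_def b_def by simp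
  have dY: "degree Y = degree Q + degree T" unfolding Y_def using Q0 T0 unfolding T_def
    by (simp add: degree_mult_eq)
  have dK: "d ^ Suc K \<ge> 2" using pow_ge2[OF d2] by simp
  have disj: "degree T \<le> a \<or> (a \<le> b \<and> degree T < b + d ^ Suc K)"
    using dT dK by auto
  have "(d ^ Suc (Suc K) - 1) * b + degree T < d ^ Suc K * E"
    unfolding E_def by (rule arith_bound[OF d2 disj])
  then have lt: "degree Y < degree X" using dX dY dQ by simp
  have Y0: "Y \<noteq> 0" unfolding Y_def using Q0 T0 unfolding T_def by simp
  have W: "X * pderiv Y - pderiv X * Y \<noteq> 0" by (rule wronsk_nonzero[OF lt Y0])
  have cop': "poly X c \<noteq> 0" if "poly Q c = 0" for c
  proof -
    have qc: "poly q c = 0" using that unfolding Q_def by (simp add: poly_power)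
    have "poly p c \<noteq> 0" by (rule coprime_no_common_root[OF cop qc])
    then have "poly (PP d p q (Suc K)) c \<noteq> 0"
      using poly_PP_q0[OF qc, of d p "Suc K"] d2 by (simp del: PP.simps)
    then show ?thesis unfolding X_def by (simp add: poly_power del: PP.simps)
  qed
  have M: "degree X + degree (X + Y) + degree Q
     \<le> card {c. poly X c = 0} + card {c. poly (X + Y) c = 0} + card {c. poly Q c = 0}
        + degree (X * pderiv Y - pderiv X * Y)"
    by (rule mason[OF W _ cop']) (simp add: Y_def)
  have dX1: "degree X \<ge> 1" using dX E1 d2 by simp
  have DW: "degree (X * pderiv Y - pderiv X * Y) \<le> degree X + degree Y - 1"
    by (rule wronsk_degree[OF dX1])
  have cX: "card {c. poly X c = 0} \<le> d ^ K * E"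
  proof -
    have "{c. poly X c = 0} = {c. poly (PP d p q (Suc K)) c = 0}"
      unfolding X_def using d2 by (intro card_roots_power) simp
    then show ?thesis using card_poly_roots_bound[OF P0] dP by simp
  qed
  have cQ: "card {c. poly Q c = 0} \<le> b"
  proof -
    have "d ^ Suc (Suc K) \<ge> 2" using pow_ge2[OF d2, of "Suc K"] by simp
    then have "{c. poly Q c = 0} = {c. poly q c = 0}"
      unfolding Q_def by (intro card_roots_power) simp
    then show ?thesis using card_poly_roots_bound[OF q0] unfolding b_def by simp
  qed
  have bT: "b + degree T \<le> E"
  proof (cases "a \<le> b")
    case True
    then have "b + degree T \<le> b + Suc b" using dT by simp
    also have "\<dots> \<le> d * b + 1" using d2 mult_le_mono1[of 2 d b] by linarith
    finally show ?thesis unfolding E_def by simp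
  next
    case False
    then have "b + degree T \<le> a + a" using dT by simp
    also have "\<dots> \<le> d * a" using d2 mult_le_mono1[of 2 d a] by linarith
    finally show ?thesis unfolding E_def by simp
  qed
  have dZ: "degree (X + Y) = d ^ Suc K * E"
    using deg_HH[OF d2 q0, of p "Suc K"] Zeq unfolding E_def a_def b_def by simp
  define rZ where "rZ = {c. poly (X + Y) c = 0}"
  have key: "card rZ + d ^ K * E + E \<ge> d ^ Suc K * E + 1"
    using M DW cX cQ bT dZ dY dQ dX1 unfolding rZ_def by linarith
  define S where "S = (\<Sum>i<k. d ^ i)"
  have num: "S + 1 \<le> d ^ K * (d - 1)" unfolding S_def k_def by (rule numeric_bound[OF d2 ex])
  have "d ^ Suc K * E = d ^ K * E + d ^ K * (d - 1) * E"
    using d2 by (simp add: algebra_simps)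
  moreover have "(S + 1) * E \<le> d ^ K * (d - 1) * E" using num by (rule mult_le_mono1)
  ultimately have cZ: "card rZ \<ge> S * E + 1" using key by (simp add: algebra_simps)
  define B where "B = (\<Union>i<k. {c. poly (HH d p q (Suc i)) c = 0})"
  have Hne: "HH d p q (Suc i) \<noteq> 0" for i
  proof
    assume "HH d p q (Suc i) = 0"
    then show False using deg_HH[OF d2 q0, of p i] E1 d2 unfolding E_def a_def b_def by simp
  qed
  have fB: "finite B" unfolding B_def using Hne by (simp add: poly_roots_finite)
  have "card B \<le> (\<Sum>i<k. card {c. poly (HH d p q (Suc i)) c = 0})"
    unfolding B_def by (rule card_UN_le) simp
  also have "\<dots> \<le> (\<Sum>i<k. d ^ i * E)"
  proof (rule sum_mono)
    fix i assume "i \<in> {..<k}"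
    show "card {c. poly (HH d p q (Suc i)) c = 0} \<le> d ^ i * E"
      using card_poly_roots_bound[OF Hne[of i]] deg_HH[OF d2 q0, of p i]
      unfolding E_def a_def b_def by simp
  qed
  also have "\<dots> = S * E" unfolding S_def by (simp add: sum_distrib_right)
  finally have cB: "card B < card rZ" using cZ by simp
  have "\<not> rZ \<subseteq> B"
  proof
    assume "rZ \<subseteq> B"
    then have "card rZ \<le> card B" by (rule card_mono[OF fB])
    then show False using cB by simp
  qed
  then obtain c where c1: "c \<in> rZ" and c2: "c \<notin> B" by blast
  have "poly (HH d p q (K+2)) c = 0" using c1 Zeq unfolding rZ_def by simp
  moreover have "\<forall>i < (K+2) div 2. poly (HH d p q (Suc i)) c \<noteq> 0"
    using c2 unfolding B_def k_def by blast
  ultimately show ?thesis by blast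
qed



lemma deg_PP_t:
  fixes q :: "'a::field poly"
  assumes "d \<ge> 2" "q \<noteq> 0" "degree q = 0"
  shows "degree (PP d ([:0,1:] * q) q n) = d ^ n"
proof (induction n)
  case 0 then show ?case using assms by (simp add: degree_X_times)
next
  case (Suc n)
  have P0: "PP d ([:0,1:] * q) q n \<noteq> 0" using Suc.IH assms by (intro notI) simp
  have dA: "degree (PP d ([:0,1:] * q) q n ^ d) = d ^ Suc n"
    using P0 Suc.IH by (simp add: degree_power_eq)
  have dB: "degree ([:0,1:] * q ^ (d ^ Suc n)) = 1"
    using assms by (simp add: degree_X_times degree_power_eq del: power_Suc)
  have "d ^ Suc n \<ge> 2" using pow_ge2[OF assms(1)] by simp
  then show ?case using dA dB
    by (simp del: power_Suc PP.simps add: PP.simps(2)[of d _ q n] degree_add_eq_left)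
qed

lemma count_t:
  fixes q :: "'a::{alg_closed_field, field_char_0} poly"
  assumes d2: "d \<ge> 2" and q0: "q \<noteq> 0" and cop: "coprime ([:0,1:] * q) q"
    and ex: "\<not> (K = 0 \<and> d = 2)"
  shows "\<exists>c. poly (HH d ([:0,1:] * q) q (K+2)) c = 0 \<and>
    (\<forall>i < (K+2) div 2. poly (HH d ([:0,1:] * q) q (Suc i)) c \<noteq> 0)"
proof -
  define p where "p = [:0,1:] * q"
  have "is_unit q" using cop unfolding p_def by (metis coprime_common_divisor dvd_refl dvd_triv_right)
  then have dq: "degree q = 0" by (simp add: is_unit_iff_degree[OF q0])
  define k where "k = (K + 2) div 2"
  have dP: "degree (PP d p q n) = d ^ n" for n unfolding p_def by (rule deg_PP_t[OF d2 q0 dq])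
  have P0: "PP d p q n \<noteq> 0" for n using dP[of n] d2 by (intro notI) simp
  have Hid: "HH d p q (Suc m) = PP d p q m ^ d" for m
    using HH_identity[of d p q m] d2 unfolding p_def by simp
  define X where "X = PP d p q K ^ d"
  define Y where "Y = [:0,1:] * q ^ (d ^ Suc K)"
  have Zeq: "PP d p q (Suc K) = X + Y" unfolding X_def Y_def by simp
  have dX: "degree X = d ^ Suc K" unfolding X_def using P0 dP by (simp add: degree_power_eq)
  have dY: "degree Y = 1" unfolding Y_def using q0 dq by (simp add: degree_X_times degree_power_eq del: power_Suc)
  have "d ^ Suc K \<ge> 2" using pow_ge2[OF d2] by simp
  then have lt: "degree Y < degree X" using dX dY by simp
  have Y0: "Y \<noteq> 0" using dY by auto
  have W: "X * pderiv Y - pderiv X * Y \<noteq> 0" by (rule wronsk_nonzero[OF lt Y0])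
  have M: "degree X + degree (X + Y) + degree (1::'a poly)
     \<le> card {c. poly X c = 0} + card {c. poly (X + Y) c = 0} + card {c. poly (1::'a poly) c = 0}
        + degree (X * pderiv Y - pderiv X * Y)"
    by (rule mason[OF W]) simp_all
  have dX1: "degree X \<ge> 1" using lt by simp
  have DW: "degree (X * pderiv Y - pderiv X * Y) \<le> degree X + degree Y - 1"
    by (rule wronsk_degree[OF dX1])
  have rX: "{c. poly X c = 0} = {c. poly (PP d p q K) c = 0}"
    unfolding X_def using d2 by (intro card_roots_power) simp
  have cX: "card {c. poly X c = 0} \<le> d ^ K"
    unfolding rX using card_poly_roots_bound[OF P0[of K]] dP by simp
  define rZ where "rZ = {c. poly (X + Y) c = 0}"
  have dZ: "degree (X + Y) = d ^ Suc K" using dP[of "Suc K"] Zeq by simp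
  have key: "card rZ + d ^ K \<ge> d ^ Suc K"
    using M DW cX dZ dY unfolding rZ_def by simp
  define S where "S = (\<Sum>i<k. d ^ i)"
  have num: "S + 1 \<le> d ^ K * (d - 1)" unfolding S_def k_def by (rule numeric_bound[OF d2 ex])
  have "d ^ Suc K = d ^ K + d ^ K * (d - 1)" using d2 by (simp add: algebra_simps)
  then have cZ: "card rZ \<ge> S + 1" using key num by linarith
  define B where "B = (\<Union>i<k. {c. poly (HH d p q (Suc i)) c = 0})"
  have rH: "{c. poly (HH d p q (Suc i)) c = 0} = {c. poly (PP d p q i) c = 0}" for i
    unfolding Hid using d2 by (intro card_roots_power) simp
  have fB: "finite B" unfolding B_def rH using P0 by (simp add: poly_roots_finite)
  have "card B \<le> (\<Sum>i<k. card {c. poly (HH d p q (Suc i)) c = 0})"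
    unfolding B_def by (rule card_UN_le) simp
  also have "\<dots> \<le> (\<Sum>i<k. d ^ i)"
  proof (rule sum_mono)
    fix i assume "i \<in> {..<k}"
    show "card {c. poly (HH d p q (Suc i)) c = 0} \<le> d ^ i"
      unfolding rH using card_poly_roots_bound[OF P0[of i]] dP[of i] by simp
  qed
  finally have cB: "card B < card rZ" using cZ unfolding S_def by simp
  have "\<not> rZ \<subseteq> B"
  proof
    assume "rZ \<subseteq> B"
    then have "card rZ \<le> card B" by (rule card_mono[OF fB])
    then show False using cB by simp
  qed
  then obtain c where c1: "c \<in> rZ" and c2: "c \<notin> B" by blast
  have "poly (HH d p q (K+2)) c = 0"
    using c1 Zeq Hid[of "Suc K"] d2 unfolding rZ_def by (simp add: poly_power del: PP.simps)
  moreover have "\<forall>i < (K+2) div 2. poly (HH d p q (Suc i)) c \<noteq> 0"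
    using c2 unfolding B_def k_def by blast
  ultimately show ?thesis unfolding p_def by blast
qed



definition BB :: "'a::comm_ring_1 poly \<Rightarrow> 'a poly \<Rightarrow> 'a poly" where
  "BB p q = p ^ 2 + p * q + ([:0,1:] + 1) * q ^ 2"

lemma HH2_factor:
  fixes p q :: "'a::comm_ring_1 poly"
  shows "HH 2 p q 2 = HH 2 p q 1 * BB p q"
  unfolding HH_def BB_def by (simp add: numeral_2_eq_2) (simp add: algebra_simps power2_eq_square)

lemma BB_minus_HH1:
  fixes p q :: "'a::comm_ring_1 poly"
  shows "BB p q - HH 2 p q 1 = q * (2 * p + q)"
  unfolding HH_def BB_def by (simp add: numeral_2_eq_2) (simp add: algebra_simps power2_eq_square)

lemma BB_four:
  fixes p q :: "'a::comm_ring_1 poly"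
  shows "4 * BB p q = (2 * p + q) ^ 2 + (4 * [:0,1:] + 3) * q ^ 2"
  unfolding BB_def by (simp add: algebra_simps power2_eq_square)

lemma case22:
  fixes p q :: "'a::{alg_closed_field, field_char_0} poly"
  assumes q0: "q \<noteq> 0" and cop: "coprime p q" and s0: "2 * p + q \<noteq> 0"
  shows "\<exists>c. poly (HH 2 p q 2) c = 0 \<and> poly (HH 2 p q 1) c \<noteq> 0"
proof (rule ccontr)
  assume nex: "\<not> ?thesis"
  define s where "s = 2 * p + q"
  define B where "B = BB p q"
  define E where "E = max (2 * degree p) (2 * degree q + 1)"
  have E1: "E \<ge> 1" unfolding E_def by simp
  have dP1: "degree (PP 2 p q 1) = E" using deg_PP[of 2 q p 0] q0 unfolding E_def by simp
  have Bsplit: "B = PP 2 p q 1 + (p * q + q ^ 2)"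
    unfolding B_def BB_def by (simp add: numeral_2_eq_2) (simp add: algebra_simps power2_eq_square)
  have "degree (p * q + q ^ 2) < E"
  proof -
    have "degree (p * q) \<le> degree p + degree q" by (rule degree_mult_le)
    moreover have "degree (q ^ 2) \<le> 2 * degree q" using degree_power_le[of q 2] by (simp add: mult.commute)
    moreover have "degree (p * q + q ^ 2) \<le> max (degree (p * q)) (degree (q ^ 2))" by (rule degree_add_le_max)
    ultimately show ?thesis unfolding E_def by auto
  qed
  then have dB: "degree B = E" unfolding Bsplit using dP1 by (simp add: degree_add_eq_left)
  then obtain c0 where c0: "poly B c0 = 0" using E1 alg_closed_imp_poly_has_root[of B] by auto
  have B0: "B \<noteq> 0" using dB E1 by auto
  have root_props: "poly q c \<noteq> 0 \<and> poly s c = 0 \<and> 4 * c + 3 = 0" if Bc: "poly B c = 0" for c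
  proof -
    have qc: "poly q c \<noteq> 0"
    proof
      assume qc: "poly q c = 0"
      then have "poly p c ^ 2 = 0" using Bc unfolding B_def BB_def by simp
      then show False using coprime_no_common_root[OF cop qc] by simp
    qed
    have "poly (HH 2 p q 2) c = 0" using Bc unfolding HH2_factor B_def by simp
    then have H1: "poly (HH 2 p q 1) c = 0" using nex by blast
    have "poly (BB p q - HH 2 p q 1) c = 0" using H1 Bc unfolding B_def by simp
    then have "poly q c * poly s c = 0" unfolding BB_minus_HH1 s_def by simp
    then have sc: "poly s c = 0" using qc by simp
    have "poly (4 * BB p q) c = 0" using Bc unfolding B_def by simp
    then have "(4 * c + 3) * poly q c ^ 2 = 0" unfolding BB_four using sc unfolding s_def by (simp add: mult.commute)
    then show ?thesis using qc sc by simp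
  qed
  have uniq: "c = c0" if "poly B c = 0" for c
  proof -
    have "4 * c + 3 = 4 * c0 + (3::'a)" using root_props[OF that] root_props[OF c0] by simp
    then have "4 * c = 4 * c0" by simp
    then show ?thesis by simp
  qed
  have "poly (pderiv B) c0 \<noteq> 0"
  proof
    assume d0: "poly (pderiv B) c0 = 0"
    have "pderiv (4 * B) = 4 * pderiv B" by (simp add: pderiv_mult)
    then have "poly (pderiv (4 * B)) c0 = 0" using d0 by simp
    moreover have "poly (pderiv (4 * B)) c0 = 2 * poly s c0 * poly (pderiv s) c0 + 4 * poly q c0 ^ 2
        + (4 * c0 + 3) * (2 * poly q c0 * poly (pderiv q) c0)"
      unfolding B_def BB_four s_def[symmetric]
      by (simp add: pderiv_add pderiv_mult pderiv_power_Suc power2_eq_square pderiv_pCons algebra_simps)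
    then have "poly (pderiv (4 * B)) c0 = 4 * poly q c0 ^ 2"
      using root_props[OF c0] by simp
    ultimately show False using root_props[OF c0] by simp
  qed
  then have "order c0 (pderiv B) = 0" by (rule order_0I)
  then have o1: "order c0 B = 1" using order_pderiv[OF B0 c0] by simp
  have "degree B \<le> (\<Sum>c\<in>{c0}. order c B)"
    by (rule degree_le_sum_order[OF _ B0]) (use uniq in auto)
  then have "E \<le> 1" using dB o1 by simp
  then have dp: "degree p = 0" and dq: "degree q = 0" unfolding E_def by auto
  have "degree s = 0"
  proof -
    have "degree (2 * p) = 0" using dp degree_mult_le[of 2 p] by simp
    then show ?thesis unfolding s_def using dq degree_add_le_max[of "2*p" q] by simp
  qed
  then obtain a where "s = [:a:]" by (elim degree_eq_zeroE)
  then have "s = 0" using root_props[OF c0] by simp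
  then show False using s0 unfolding s_def by simp
qed



lemma funpow_mult_fix: "(f ^^ m) x = x \<Longrightarrow> (f ^^ (j * m)) x = x"
  by (induction j) (simp_all add: funpow_add)

lemma small_period:
  assumes N: "(f ^^ N) x = x" and m: "0 < m" "m < N" "(f ^^ m) x = x"
  shows "\<exists>m0. 0 < m0 \<and> m0 \<le> N div 2 \<and> (f ^^ m0) x = x"
proof -
  define P where "P = (\<lambda>k. 0 < k \<and> (f ^^ k) x = x)"
  define m0 where "m0 = (LEAST k. P k)"
  have Pm: "P m" unfolding P_def using m by simp
  have P0: "P m0" unfolding m0_def by (rule LeastI[of P m, OF Pm])
  have le: "m0 \<le> m" unfolding m0_def by (rule Least_le[of P m, OF Pm])
  have pos: "0 < m0" and fx: "(f ^^ m0) x = x" using P0 unfolding P_def by auto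
  have "N = N mod m0 + (N div m0) * m0" by simp
  then have "(f ^^ N) x = (f ^^ (N mod m0)) ((f ^^ ((N div m0) * m0)) x)"
    by (metis funpow_add comp_apply)
  then have r: "(f ^^ (N mod m0)) x = x" using N funpow_mult_fix[OF fx] by simp
  have "N mod m0 = 0"
  proof (rule ccontr)
    assume "N mod m0 \<noteq> 0"
    then have "P (N mod m0)" unfolding P_def using r by simp
    then have "m0 \<le> N mod m0" unfolding m0_def by (rule Least_le[of P])
    moreover have "N mod m0 < m0" using pos by simp
    ultimately show False by simp
  qed
  then obtain j where j: "N = m0 * j" by (metis dvd_eq_mod_eq_0 dvdE)
  have "j \<ge> 2"
  proof (rule ccontr)
    assume "\<not> j \<ge> 2"
    then have "j \<le> 1" by simp
    then have "N \<le> m0" using j by (cases j) auto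
    then show False using le m by simp
  qed
  then have "m0 * 2 \<le> N" using j by (metis mult_le_mono2)
  then have "m0 \<le> N div 2" by simp
  then show ?thesis using pos fx by blast
qed

lemma portrait_from_H:
  fixes p q :: "'a::field poly"
  assumes d: "d \<ge> 2" and qc: "poly q c \<noteq> 0" and N1: "N \<ge> 1"
    and H: "poly (HH d p q N) c = 0" and nb: "\<forall>i < N div 2. poly (HH d p q (Suc i)) c \<noteq> 0"
  shows "has_portrait (fdc d c) (Some (poly p c / poly q c)) 0 N"
proof -
  define x where "x = Some (poly p c / poly q c)"
  have orb: "(fdc d c ^^ n) x = x \<longleftrightarrow> poly (HH d p q n) c = 0" for n
    unfolding x_def orbit_PP[OF qc] using H_root_iff[OF qc, of d p n] d by simp
  have fN: "(fdc d c ^^ N) x = x" using orb H by simp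
  have ex: "(fdc d c ^^ m) x \<noteq> x" if m1: "0 < m" and m2: "m < N" for m
  proof
    assume a: "(fdc d c ^^ m) x = x"
    obtain m0 where m0: "0 < m0" "m0 \<le> N div 2" "(fdc d c ^^ m0) x = x"
      using small_period[OF fN m1 m2 a] by blast
    then obtain i where i: "m0 = Suc i" by (cases m0) auto
    have "i < N div 2" using m0 i by simp
    then have "poly (HH d p q m0) c \<noteq> 0" using nb i by simp
    then show False using orb m0 by simp
  qed
  show ?thesis unfolding has_portrait_def has_exact_period_def is_periodic_def x_def[symmetric]
    using fN ex N1 by auto
qed



lemma half_iff:
  fixes p q :: "'a::{field_char_0, field_gcd} poly"
  assumes q0: "q \<noteq> 0"
  shows "Fract p q = - 1 / 2 \<longleftrightarrow> 2 * p + q = 0"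
proof -
  have two: "(2 :: 'a poly fract) = Fract 2 1" using of_nat_fract[of 2, where 'a="'a poly"] by simp
  have m1: "(-1 :: 'a poly fract) = Fract (-1) 1" by (simp add: One_fract_def)
  have two0: "(2 :: 'a poly fract) \<noteq> 0" unfolding two by (simp add: eq_fract Zero_fract_def)
  have "Fract p q = - 1 / 2 \<longleftrightarrow> 2 * Fract p q = -1" unfolding eq_divide_eq using two0 by (simp add: mult.commute)
  also have "\<dots> \<longleftrightarrow> Fract (2 * p) q = Fract (-1) 1" unfolding two m1 by simp
  also have "\<dots> \<longleftrightarrow> 2 * p * 1 = -1 * q" using q0 by (simp add: eq_fract)
  also have "\<dots> \<longleftrightarrow> 2 * p = - q" by simp
  also have "\<dots> \<longleftrightarrow> 2 * p + q = 0" by (rule eq_neg_iff_add_eq_0)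
  finally show ?thesis .
qed

theorem proposition3p2:
  fixes \<alpha> :: "'a::{alg_closed_field, field_char_0, field_gcd} poly fract"
    and N d :: nat
  assumes "N \<ge> 1" and "d \<ge> 2"
  shows "realizes_portrait \<alpha> d 0 N \<longleftrightarrow> \<not> (\<alpha> = - 1 / 2 \<and> N = 2 \<and> d = 2)"
proof -
  note N1 = assms(1) and d2 = assms(2)
  obtain p q where pq: "quot_of_fract \<alpha> = (p, q)" by (cases "quot_of_fract \<alpha>")
  have q0: "q \<noteq> 0" using snd_quot_of_fract_nonzero[of \<alpha>] pq by simp
  have cop: "coprime p q" using coprime_quot_of_fract[of \<alpha>] pq by simp
  have aeq: "\<alpha> = Fract p q" using Fract_quot_of_fract[of \<alpha>] pq by simp
  have spec_eq: "specialize \<alpha> c = (if poly q c = 0 then None else Some (poly p c / poly q c))" for c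
    unfolding specialize_def pq by simp
  have half: "\<alpha> = - 1 / 2 \<longleftrightarrow> 2 * p + q = 0" unfolding aeq by (rule half_iff[OF q0])
  show ?thesis
  proof
    assume R: "realizes_portrait \<alpha> d 0 N"
    show "\<not> (\<alpha> = - 1 / 2 \<and> N = 2 \<and> d = 2)"
    proof
      assume ex: "\<alpha> = - 1 / 2 \<and> N = 2 \<and> d = 2"
      then have s0: "2 * p + q = 0" and N2: "N = 2" and dd: "d = 2" using half by auto
      obtain c where hp: "has_portrait (fdc 2 c) (specialize \<alpha> c) 0 2"
        using R N2 dd unfolding realizes_portrait_def by auto
      then have ep: "has_exact_period (fdc 2 c) (specialize \<alpha> c) 2"
        unfolding has_portrait_def by simp
      show False
      proof (cases "poly q c = 0")
        case True
        then have "specialize \<alpha> c = None" using spec_eq by simp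
        then have "(fdc 2 c ^^ 1) (specialize \<alpha> c) = specialize \<alpha> c" by (simp add: fdc_def)
        then show False using ep unfolding has_exact_period_def by (elim conjE) (drule spec[of _ 1], simp)
      next
        case False
        then have sx: "specialize \<alpha> c = Some (poly p c / poly q c)" using spec_eq by simp
        have orb: "(fdc 2 c ^^ n) (Some (poly p c / poly q c)) = Some (poly p c / poly q c)
            \<longleftrightarrow> poly (HH 2 p q n) c = 0" for n
          unfolding orbit_PP[OF False] using H_root_iff[OF False, of 2 p n] by simp
        have e2: "(fdc 2 c ^^ 2) (Some (poly p c / poly q c)) = Some (poly p c / poly q c)"
          using ep unfolding sx has_exact_period_def by (elim conjE)
        have e1: "(fdc 2 c ^^ 1) (Some (poly p c / poly q c)) \<noteq> Some (poly p c / poly q c)"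
          using ep unfolding sx has_exact_period_def by (elim conjE) (drule spec[of _ 1], simp)
        have "poly (HH 2 p q 2) c = 0" using e2 orb[of 2] by (simp only:)
        moreover have "poly (HH 2 p q 1) c \<noteq> 0" using e1 orb[of 1] by blast
        moreover have "BB p q = HH 2 p q 1" using BB_minus_HH1[of p q] s0 by simp
        ultimately show False unfolding HH2_factor by simp
      qed
    qed
  next
    assume nex: "\<not> (\<alpha> = - 1 / 2 \<and> N = 2 \<and> d = 2)"
    have "\<exists>c. poly (HH d p q N) c = 0 \<and> (\<forall>i < N div 2. poly (HH d p q (Suc i)) c \<noteq> 0)"
    proof (cases "N = 1")
      case True
      have "degree (HH d p q (Suc 0)) = max (d * degree p) (d * degree q + 1)"
        using deg_HH[OF d2 q0, of p 0] by simp
      then have "degree (HH d p q 1) > 0" by simp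
      then obtain c where "poly (HH d p q 1) c = 0" using alg_closed_imp_poly_has_root by blast
      then show ?thesis using True by auto
    next
      case False
      define K where "K = N - 2"
      have K: "N = K + 2" using N1 False unfolding K_def by arith
      show ?thesis
      proof (cases "K = 0 \<and> d = 2")
        case True
        then have "2 * p + q \<noteq> 0" using nex half K by auto
        then obtain c where "poly (HH 2 p q 2) c = 0" "poly (HH 2 p q 1) c \<noteq> 0"
          using case22[OF q0 cop] by blast
        then show ?thesis using True K by (auto simp: numeral_2_eq_2)
      next
        case False
        show ?thesis
        proof (cases "[:0,1:] * q - p = 0")
          case T: True
          then have pe: "p = [:0,1:] * q" by simp
          show ?thesis using count_t[OF d2 q0 cop[unfolded pe] False] unfolding K pe .
        next
          case T: False
          show ?thesis using count_general[OF d2 q0 cop T False] unfolding K .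
        qed
      qed
    qed
    then obtain c where H: "poly (HH d p q N) c = 0" and nb: "\<forall>i < N div 2. poly (HH d p q (Suc i)) c \<noteq> 0"
      by blast
    have qc: "poly q c \<noteq> 0" using poly_HH_q0[OF cop _ d2 N1] H by blast
    have "has_portrait (fdc d c) (specialize \<alpha> c) 0 N"
      using portrait_from_H[OF d2 qc N1 H nb] spec_eq qc by simp
    then show "realizes_portrait \<alpha> d 0 N" unfolding realizes_portrait_def by blast
  qed
qed


end
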